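(* Let $G$ be a finitely generated group hyperbolic relative to a finite collection $\mathcal P=\{P_\lambda\}_{\lambda\in\Lambda}$, $S$ a finite generating set, and $n\ge1$. Then the $G$-action on the $n$-Rips complex $\Gamma_n^\blacktriangle$ is cocompact, i.e. there are finitely many $G$-orbits of simplices.
   Context: Let $\Gamma$ be the Cayley graph of $G$ with respect to $S$, $V=G$, $W$ the set of cosets $gP_\lambda$. Relative hyperbolicity means the coned-off Cayley graph (vertex set $V\cup W$, edges of $\Gamma$ plus an edge $(v,w)$ whenever $v\in w$) is fine (for every edge $e$ and integer $m$, finitely many circuits of length $\le m$ contain $e$) and $\delta$-hyperbolic. Extend $|\cdot,\cdot|_S$ to $V\cup W$ via distances in $\Gamma$ between the corresponding elements/cosets. $\Gamma_n$ has vertex set $V\cup W$ and an edge between $u\ne u'$ whenever $|u,u'|_S\le n$; $\Gamma_n^\blacktriangle$ is obtained by spanning simplices on all cliques of $\Gamma_n$. *)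

theory Defs
  imports "HOL-Algebra.Algebra"
begin

definition word_len :: "('a, 'b) monoid_scheme \<Rightarrow> 'a set \<Rightarrow> 'a \<Rightarrow> nat" where
  "word_len G S g = (LEAST k. \<exists>ws. length ws = k \<and> set ws \<subseteq> S \<union> m_inv G ` S
        \<and> foldr (monoid.mult G) ws (one G) = g)"

definition word_dist :: "('a, 'b) monoid_scheme \<Rightarrow> 'a set \<Rightarrow> 'a \<Rightarrow> 'a \<Rightarrow> nat" where
  "word_dist G S g h = word_len G S (monoid.mult G (m_inv G g) h)"

text \<open>El g is the group element g (a vertex of V); Cos l C is the left coset C = g P_l
  (a vertex of W), tagged with the index l of the peripheral subgroup.\<close>
datatype ('a, 'l) cvert = El 'a | Cos 'l "'a set"

definition cverts :: "('a, 'b) monoid_scheme \<Rightarrow> 'l set \<Rightarrow> ('l \<Rightarrow> 'a set) \<Rightarrow> ('a, 'l) cvert set" where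
  "cverts G Lam P = El ` carrier G \<union>
     {Cos l (l_coset G g (P l)) | l g. l \<in> Lam \<and> g \<in> carrier G}"

fun ext_dist :: "('a, 'b) monoid_scheme \<Rightarrow> 'a set \<Rightarrow> ('a, 'l) cvert \<Rightarrow> ('a, 'l) cvert \<Rightarrow> nat" where
  "ext_dist G S (El g) (El h) = word_dist G S g h"
| "ext_dist G S (El g) (Cos l C) = Inf {word_dist G S g c | c. c \<in> C}"
| "ext_dist G S (Cos l C) (El g) = Inf {word_dist G S c g | c. c \<in> C}"
| "ext_dist G S (Cos l A) (Cos m B) = Inf {word_dist G S a b | a b. a \<in> A \<and> b \<in> B}"

definition coned_edge :: "('a, 'b) monoid_scheme \<Rightarrow> 'a set \<Rightarrow> 'l set \<Rightarrow> ('l \<Rightarrow> 'a set)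
    \<Rightarrow> ('a, 'l) cvert \<Rightarrow> ('a, 'l) cvert \<Rightarrow> bool" where
  "coned_edge G S Lam P u v \<longleftrightarrow> u \<in> cverts G Lam P \<and> v \<in> cverts G Lam P \<and> u \<noteq> v \<and>
     ((\<exists>g s. g \<in> carrier G \<and> s \<in> S \<and>
          ((u = El g \<and> v = El (monoid.mult G g s)) \<or> (v = El g \<and> u = El (monoid.mult G g s))))
    \<or> (\<exists>g l C. (u = El g \<and> v = Cos l C \<or> v = El g \<and> u = Cos l C) \<and> g \<in> C))"

definition is_circuit :: "('v \<Rightarrow> 'v \<Rightarrow> bool) \<Rightarrow> 'v list \<Rightarrow> bool" where
  "is_circuit E cs \<longleftrightarrow> length cs \<ge> 3 \<and> distinct cs \<and>
     (\<forall>i < length cs. E (cs ! i) (cs ! ((i + 1) mod length cs)))"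

definition circuit_contains_edge :: "'v list \<Rightarrow> 'v \<Rightarrow> 'v \<Rightarrow> bool" where
  "circuit_contains_edge cs u v \<longleftrightarrow> (\<exists>i < length cs.
      {cs ! i, cs ! ((i + 1) mod length cs)} = {u, v})"

definition fine_graph :: "('v \<Rightarrow> 'v \<Rightarrow> bool) \<Rightarrow> bool" where
  "fine_graph E \<longleftrightarrow> (\<forall>u v m. E u v \<longrightarrow>
      finite {cs. is_circuit E cs \<and> length cs \<le> m \<and> circuit_contains_edge cs u v})"

definition is_walk :: "('v \<Rightarrow> 'v \<Rightarrow> bool) \<Rightarrow> 'v list \<Rightarrow> bool" where
  "is_walk E ps \<longleftrightarrow> ps \<noteq> [] \<and> (\<forall>i. Suc i < length ps \<longrightarrow> E (ps ! i) (ps ! Suc i))"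

definition graph_dist :: "('v \<Rightarrow> 'v \<Rightarrow> bool) \<Rightarrow> 'v \<Rightarrow> 'v \<Rightarrow> nat" where
  "graph_dist E u v = (LEAST k. \<exists>ps. is_walk E ps \<and> hd ps = u \<and> last ps = v \<and> length ps = Suc k)"

definition gromov_prod :: "('v \<Rightarrow> 'v \<Rightarrow> bool) \<Rightarrow> 'v \<Rightarrow> 'v \<Rightarrow> 'v \<Rightarrow> real" where
  "gromov_prod E w x y = (real (graph_dist E x w) + real (graph_dist E y w) - real (graph_dist E x y)) / 2"

definition hyperbolic_graph :: "'v set \<Rightarrow> ('v \<Rightarrow> 'v \<Rightarrow> bool) \<Rightarrow> real \<Rightarrow> bool" where
  "hyperbolic_graph V E \<delta> \<longleftrightarrow> \<delta> \<ge> 0 \<and>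
     (\<forall>u\<in>V. \<forall>v\<in>V. \<exists>ps. is_walk E ps \<and> hd ps = u \<and> last ps = v \<and> set ps \<subseteq> V) \<and>
     (\<forall>w\<in>V. \<forall>x\<in>V. \<forall>y\<in>V. \<forall>z\<in>V.
        gromov_prod E w x z \<ge> min (gromov_prod E w x y) (gromov_prod E w y z) - \<delta>)"

definition rel_hyperbolic :: "('a, 'b) monoid_scheme \<Rightarrow> 'a set \<Rightarrow> 'l set \<Rightarrow> ('l \<Rightarrow> 'a set) \<Rightarrow> bool" where
  "rel_hyperbolic G S Lam P \<longleftrightarrow> (\<forall>l\<in>Lam. subgroup (P l) G) \<and>
     fine_graph (coned_edge G S Lam P) \<and>
     (\<exists>\<delta>. hyperbolic_graph (cverts G Lam P) (coned_edge G S Lam P) \<delta>)"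

definition rips_simplices :: "('a, 'b) monoid_scheme \<Rightarrow> 'a set \<Rightarrow> 'l set \<Rightarrow> ('l \<Rightarrow> 'a set) \<Rightarrow> nat
    \<Rightarrow> ('a, 'l) cvert set set" where
  "rips_simplices G S Lam P n = {\<sigma>. finite \<sigma> \<and> \<sigma> \<noteq> {} \<and> \<sigma> \<subseteq> cverts G Lam P \<and>
      (\<forall>u\<in>\<sigma>. \<forall>v\<in>\<sigma>. u \<noteq> v \<longrightarrow> ext_dist G S u v \<le> n)}"

fun cact :: "('a, 'b) monoid_scheme \<Rightarrow> 'a \<Rightarrow> ('a, 'l) cvert \<Rightarrow> ('a, 'l) cvert" where
  "cact G g (El h) = El (monoid.mult G g h)"
| "cact G g (Cos l C) = Cos l (l_coset G g C)"

end

theory Submission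
  imports Defs
begin


inductive rch :: "('v \<Rightarrow> 'v \<Rightarrow> bool) \<Rightarrow> 'v \<Rightarrow> nat \<Rightarrow> 'v \<Rightarrow> bool" for R where
  rch_refl: "rch R x k x"
| rch_step: "R x y \<Longrightarrow> rch R y k z \<Longrightarrow> rch R x (Suc k) z"

lemma rch_trans: "rch R x k y \<Longrightarrow> rch R y j z \<Longrightarrow> rch R x (k + j) z"
proof (induction rule: rch.induct)
  case (rch_refl x k)
  then show ?case
  proof (induction rule: rch.induct)
    case (rch_refl x j) then show ?case by (rule rch.rch_refl)
  next
    case (rch_step x y j z) then show ?case
      by (metis add_Suc_right rch.rch_step)
  qed
next
  case (rch_step x y k z) then show ?case by (simp add: rch.rch_step)
qed

lemma rch_mono: "rch R x k y \<Longrightarrow> k \<le> k' \<Longrightarrow> rch R x k' y"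
proof (induction arbitrary: k' rule: rch.induct)
  case (rch_refl x k) show ?case by (rule rch.rch_refl)
next
  case (rch_step x y k z)
  then obtain k'' where k'': "k' = Suc k''" "k \<le> k''" by (cases k') auto
  have "rch R y k'' z" using rch_step.IH k''(2) by blast
  then show ?case unfolding k''(1) using rch_step.hyps(1) by (intro rch.rch_step)
qed

lemma rch_list: "rch R x k z \<Longrightarrow> \<exists>ps. successively R ps \<and> ps \<noteq> [] \<and> hd ps = x \<and> last ps = z \<and> length ps \<le> Suc k"
proof (induction rule: rch.induct)
  case (rch_refl x k) then show ?case by (intro exI[of _ "[x]"]) auto
next
  case (rch_step x y k z)
  then obtain ps where "successively R ps" "ps \<noteq> []" "hd ps = y" "last ps = z" "length ps \<le> Suc k" by blast
  then show ?case using rch_step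
    by (intro exI[of _ "x # ps"]) (auto simp: successively_Cons)
qed

lemma distinct_walk:
  "successively R ps \<Longrightarrow> ps \<noteq> [] \<Longrightarrow> \<exists>qs. successively R qs \<and> distinct qs \<and> qs \<noteq> [] \<and> hd qs = hd ps
     \<and> last qs = last ps \<and> length qs \<le> length ps"
proof (induction "length ps" arbitrary: ps rule: less_induct)
  case less
  show ?case
  proof (cases "distinct ps")
    case True then show ?thesis using less.prems by blast
  next
    case False
    then obtain xs ys zs y where ps: "ps = xs@[y]@ys@[y]@zs" using not_distinct_decomp by blast
    let ?ps' = "xs@[y]@zs"
    have "successively R ?ps'" using less.prems(1) unfolding ps
      by (auto simp: successively_append_iff successively_Cons split: if_splits)
    moreover have "length ?ps' < length ps" using ps by simp
    moreover have "?ps' \<noteq> []" by simp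
    ultimately obtain qs where qs: "successively R qs" "distinct qs" "qs \<noteq> []" "hd qs = hd ?ps'"
       "last qs = last ?ps'" "length qs \<le> length ?ps'"
      using less.hyps by blast
    have "hd ?ps' = hd ps" "last ?ps' = last ps" "length ?ps' \<le> length ps" using ps
      by (simp_all add: hd_append)
    then show ?thesis using qs by auto
  qed
qed

lemma successively_nth: "successively R qs \<Longrightarrow> Suc i < length qs \<Longrightarrow> R (qs ! i) (qs ! Suc i)"
proof (induction qs arbitrary: i)
  case (Cons a qs)
  have s: "qs = [] \<or> R a (hd qs) \<and> successively R qs" using Cons.prems(1) by (simp only: successively_Cons)
  show ?case
  proof (cases i)
    case 0
    then have "qs \<noteq> []" using Cons.prems(2) by auto
    then show ?thesis using s 0 by (simp add: hd_conv_nth)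
  next
    case (Suc j)
    then have "Suc j < length qs" using Cons.prems(2) by simp
    then have "qs \<noteq> []" by auto
    then show ?thesis using s Suc Cons.IH[of j] \<open>Suc j < length qs\<close> by simp
  qed
qed simp

lemma successively_distinct_strict:
  "successively (\<lambda>a b. a \<noteq> u \<and> b \<noteq> u \<and> (a = b \<or> E a b)) qs \<Longrightarrow> distinct qs \<Longrightarrow> successively E qs"
  by (induction qs) (auto simp: successively_Cons)

lemma successively_avoid:
  "successively (\<lambda>a b. a \<noteq> u \<and> b \<noteq> u \<and> (a = b \<or> E a b)) qs \<Longrightarrow> qs \<noteq> [] \<Longrightarrow> hd qs \<noteq> u \<Longrightarrow> u \<notin> set qs"
proof (induction qs)
  case (Cons a qs)
  then show ?case by (cases qs) (auto simp: successively_Cons)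
qed auto

definition avR :: "('v \<Rightarrow> 'v \<Rightarrow> bool) \<Rightarrow> 'v \<Rightarrow> 'v \<Rightarrow> 'v \<Rightarrow> bool" where
  "avR E u a b \<longleftrightarrow> a \<noteq> u \<and> b \<noteq> u \<and> (a = b \<or> E a b)"

lemma angle_finite:
  assumes fine: "fine_graph E" and sym: "\<And>a b. E a b \<Longrightarrow> E b a" and e: "E u x0"
  shows "finite {x. E u x \<and> rch (avR E u) x k x0}"
proof -
  let ?C = "{cs. is_circuit E cs \<and> length cs \<le> k + 2 \<and> circuit_contains_edge cs u x0}"
  have finC: "finite ?C" using fine e unfolding fine_graph_def by blast
  have "{x. E u x \<and> rch (avR E u) x k x0} \<subseteq> insert x0 (insert u ((\<lambda>cs. cs ! 1) ` ?C))"
  proof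
    fix x assume "x \<in> {x. E u x \<and> rch (avR E u) x k x0}"
    then have ex: "E u x" and r: "rch (avR E u) x k x0" by auto
    show "x \<in> insert x0 (insert u ((\<lambda>cs. cs ! 1) ` ?C))"
    proof (cases "x = x0 \<or> x = u")
      case True then show ?thesis by auto
    next
      case False
      then have xx0: "x \<noteq> x0" and xu: "x \<noteq> u" by auto
      obtain ps where ps: "successively (avR E u) ps" "ps \<noteq> []" "hd ps = x" "last ps = x0" "length ps \<le> Suc k"
        using rch_list[OF r] by blast
      obtain qs where qs: "successively (avR E u) qs" "distinct qs" "qs \<noteq> []" "hd qs = x"
         "last qs = x0" "length qs \<le> Suc k"
        using distinct_walk[OF ps(1,2)] ps(3,4,5) by (metis le_trans)
      have sq: "successively E qs" using successively_distinct_strict[OF qs(1)[unfolded avR_def] qs(2)] .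
      have uq: "u \<notin> set qs" using successively_avoid[OF qs(1)[unfolded avR_def] qs(3)] qs(4) xu by auto
      have l2: "length qs \<ge> 2"
      proof (cases qs)
        case (Cons a t) then show ?thesis using qs(4,5) xx0 by (cases t) auto
      qed (use qs(3) in auto)
      define cs where "cs = u # qs"
      have lcs: "length cs = Suc (length qs)" by (simp add: cs_def)
      have lastq: "qs ! (length qs - 1) = x0" using qs(3,5) by (simp add: last_conv_nth)
      have hdq: "qs ! 0 = x" using qs(3,4) by (simp add: hd_conv_nth)
      have circ: "is_circuit E cs"
        unfolding is_circuit_def
      proof (intro conjI allI impI)
        show "3 \<le> length cs" using l2 lcs by simp
        show "distinct cs" using uq qs(2) by (simp add: cs_def)
        fix i assume i: "i < length cs"
        show "E (cs ! i) (cs ! ((i + 1) mod length cs))"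
        proof (cases "i = length qs")
          case True
          then have "(i+1) mod length cs = 0" using lcs by simp
          moreover have "cs ! i = x0" using True lastq l2 qs(3) by (simp add: cs_def nth_Cons')
          moreover have "E x0 u" using sym[OF e] .
          ultimately show ?thesis by (simp add: cs_def)
        next
          case False
          then have i1: "i + 1 < length cs" using i lcs by simp
          then have m: "(i+1) mod length cs = i + 1" by simp
          show ?thesis
          proof (cases i)
            case 0 then show ?thesis using m hdq ex by (simp add: cs_def)
          next
            case (Suc j)
            then have "Suc j < length qs" using i1 lcs by simp
            then show ?thesis using m Suc successively_nth[OF sq] by (simp add: cs_def)
          qed
        qed
      qed
      have "circuit_contains_edge cs u x0"
        unfolding circuit_contains_edge_def
        by (rule exI[of _ "length qs"]) (use lcs lastq l2 in \<open>auto simp: cs_def nth_Cons'\<close>)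
      moreover have "length cs \<le> k + 2" using lcs qs(6) by simp
      ultimately have "cs \<in> ?C" using circ by simp
      moreover have "cs ! 1 = x" using hdq by (simp add: cs_def)
      ultimately show ?thesis by blast
    qed
  qed
  moreover have "finite (insert x0 (insert u ((\<lambda>cs. cs ! 1) ` ?C)))" using finC by simp
  ultimately show ?thesis by (rule finite_subset)
qed




context group begin

lemma foldr_closed: "set ws \<subseteq> carrier G \<Longrightarrow> foldr (\<otimes>) ws \<one> \<in> carrier G"
  by (induction ws) auto

lemma foldr_app: "set xs \<subseteq> carrier G \<Longrightarrow> z \<in> carrier G \<Longrightarrow>
   foldr (\<otimes>) xs z = foldr (\<otimes>) xs \<one> \<otimes> z"
  by (induction xs) (auto simp: m_assoc foldr_closed)

lemma word_exists:
  assumes "S \<subseteq> carrier G" "g \<in> generate G S"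
  shows "\<exists>ws. set ws \<subseteq> S \<union> m_inv G ` S \<and> foldr (\<otimes>) ws \<one> = g"
  using assms(2)
proof (induction rule: generate.induct)
  case one then show ?case by (intro exI[of _ "[]"]) auto
next
  case (incl h) then show ?case using assms(1) by (intro exI[of _ "[h]"]) auto
next
  case (inv h) then show ?case using assms(1) by (intro exI[of _ "[inv h]"]) auto
next
  case (eng h1 h2)
  then obtain xs ys where "set xs \<subseteq> S \<union> m_inv G ` S" "foldr (\<otimes>) xs \<one> = h1"
    "set ys \<subseteq> S \<union> m_inv G ` S" "foldr (\<otimes>) ys \<one> = h2" by blast
  moreover have SC: "S \<union> m_inv G ` S \<subseteq> carrier G" using assms(1) by auto
  ultimately have "set xs \<subseteq> carrier G" "set ys \<subseteq> carrier G" by auto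
  then have "foldr (\<otimes>) (xs @ ys) \<one> = h1 \<otimes> h2"
    using foldr_app[of xs "foldr (\<otimes>) ys \<one>"] foldr_closed[of ys] \<open>foldr (\<otimes>) xs \<one> = h1\<close>
      \<open>foldr (\<otimes>) ys \<one> = h2\<close> by simp
  then show ?case using \<open>set xs \<subseteq> S \<union> m_inv G ` S\<close> \<open>set ys \<subseteq> S \<union> m_inv G ` S\<close>
    by (intro exI[of _ "xs @ ys"]) simp
qed

lemma word_len_attained:
  assumes "S \<subseteq> carrier G" "generate G S = carrier G" "g \<in> carrier G"
  shows "\<exists>ws. length ws = word_len G S g \<and> set ws \<subseteq> S \<union> m_inv G ` S \<and> foldr (\<otimes>) ws \<one> = g"
proof -
  obtain ws where "set ws \<subseteq> S \<union> m_inv G ` S \<and> foldr (\<otimes>) ws \<one> = g"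
    using word_exists[OF assms(1)] assms(2,3) by blast
  then have "\<exists>k ws. length ws = k \<and> set ws \<subseteq> S \<union> m_inv G ` S \<and> foldr (\<otimes>) ws \<one> = g" by blast
  from LeastI_ex[OF this] show ?thesis unfolding word_len_def by simp
qed

lemma word_len_one: "word_len G S \<one> = 0"
  unfolding word_len_def by (rule Least_eq_0) (intro exI[of _ "[]"], auto)

lemma ball_finite:
  assumes "finite S" "S \<subseteq> carrier G" "generate G S = carrier G"
  shows "finite {g \<in> carrier G. word_len G S g \<le> r}"
proof -
  have "{g \<in> carrier G. word_len G S g \<le> r} \<subseteq>
     (\<lambda>ws. foldr (\<otimes>) ws \<one>) ` {ws. set ws \<subseteq> S \<union> m_inv G ` S \<and> length ws \<le> r}"
  proof
    fix g assume "g \<in> {g \<in> carrier G. word_len G S g \<le> r}"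
    then have g: "g \<in> carrier G" "word_len G S g \<le> r" by auto
    obtain ws where ws: "length ws = word_len G S g" "set ws \<subseteq> S \<union> m_inv G ` S" "foldr (\<otimes>) ws \<one> = g"
      using word_len_attained[OF assms(2,3) g(1)] by blast
    show "g \<in> (\<lambda>ws. foldr (\<otimes>) ws \<one>) ` {ws. set ws \<subseteq> S \<union> m_inv G ` S \<and> length ws \<le> r}"
      by (rule image_eqI[of _ _ ws]) (use ws g in auto)
  qed
  moreover have "finite {ws. set ws \<subseteq> S \<union> m_inv G ` S \<and> length ws \<le> r}"
    using assms(1) by (intro finite_lists_length_le) auto
  ultimately show ?thesis using finite_subset finite_imageI by blast
qed

lemma word_dist_trans_inv: "a \<in> carrier G \<Longrightarrow> b \<in> carrier G \<Longrightarrow> g \<in> carrier G \<Longrightarrow>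
   word_dist G S (g \<otimes> a) (g \<otimes> b) = word_dist G S a b"
proof -
  assume a: "a \<in> carrier G" "b \<in> carrier G" "g \<in> carrier G"
  have h: "inv g \<otimes> (g \<otimes> b) = b" using a by (simp add: m_assoc[symmetric])
  have "inv (g \<otimes> a) \<otimes> (g \<otimes> b) = inv a \<otimes> b"
    using a h by (simp add: inv_mult_group m_assoc)
  then show ?thesis unfolding word_dist_def by simp
qed

lemma l_coset_image: "l_coset G g C = (\<lambda>x. g \<otimes> x) ` C"
  unfolding l_coset_def by auto

lemma cos_rep:
  assumes "subgroup H G" "c \<in> carrier G" "a \<in> carrier G" "x \<in> c <# H"
  shows "a <# (c <# H) = (a \<otimes> x) <# H"
proof -
  have "c <# H = x <# H" using l_repr_independence[OF assms(4,2,1)] .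
  moreover have "x \<in> carrier G" using l_coset_carrier[OF assms(4,2,1)] .
  ultimately show ?thesis using lcos_m_assoc[OF subgroup.subset[OF assms(1)] assms(3)] by simp
qed

lemma cverts_El: "El g \<in> cverts G Lam P \<longleftrightarrow> g \<in> carrier G"
  unfolding cverts_def by (auto simp: image_iff)

lemma cverts_CosI: "l \<in> Lam \<Longrightarrow> c \<in> carrier G \<Longrightarrow> Cos l (l_coset G c (P l)) \<in> cverts G Lam P"
  unfolding cverts_def by (rule UnI2, rule CollectI, rule exI[of _ l], rule exI[of _ c], simp)

lemma cverts_Cos:
  assumes "Cos l C \<in> cverts G Lam P"
  shows "\<exists>c. l \<in> Lam \<and> c \<in> carrier G \<and> C = l_coset G c (P l)"
proof -
  have "Cos l C \<notin> El ` carrier G" by auto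
  then have "Cos l C \<in> {Cos l (l_coset G g (P l)) | l g. l \<in> Lam \<and> g \<in> carrier G}"
    using assms unfolding cverts_def by simp
  then obtain l' g where "Cos l C = Cos l' (l_coset G g (P l'))" "l' \<in> Lam" "g \<in> carrier G"
    by (smt (verit) mem_Collect_eq)
  then show ?thesis by auto
qed

lemma cact_cverts:
  assumes "\<forall>l\<in>Lam. subgroup (P l) G" "g \<in> carrier G" "u \<in> cverts G Lam P"
  shows "cact G g u \<in> cverts G Lam P"
proof (cases u)
  case (El h)
  then have "h \<in> carrier G" using assms(3) cverts_El by blast
  then show ?thesis using El assms(2) by (simp add: cverts_El)
next
  case (Cos l C)
  obtain c where c: "l \<in> Lam" "c \<in> carrier G" "C = l_coset G c (P l)"
    using cverts_Cos[OF assms(3)[unfolded Cos]] by blast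
  have Pl: "P l \<subseteq> carrier G" using subgroup.subset[OF bspec[OF assms(1) c(1)]] .
  have e: "l_coset G g C = l_coset G (g \<otimes> c) (P l)" unfolding c(3) using lcos_m_assoc[OF Pl assms(2) c(2)] .
  have m: "Cos l (l_coset G (g \<otimes> c) (P l)) \<in> cverts G Lam P"
    using cverts_CosI[OF c(1)] assms(2) c(2) by simp
  have "cact G g u = Cos l (l_coset G (g \<otimes> c) (P l))" unfolding Cos cact.simps e ..
  then show ?thesis using m by simp
qed

lemma cverts_coset_sub:
  assumes "\<forall>l\<in>Lam. subgroup (P l) G" "Cos l C \<in> cverts G Lam P"
  shows "C \<subseteq> carrier G" "C \<noteq> {}"
proof -
  obtain c where c: "l \<in> Lam" "c \<in> carrier G" "C = l_coset G c (P l)"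
    using cverts_Cos[OF assms(2)] by blast
  have sg: "subgroup (P l) G" using bspec[OF assms(1) c(1)] .
  have "P l \<subseteq> carrier G" using subgroup.subset[OF sg] .
  then show "C \<subseteq> carrier G" unfolding c(3) by (rule l_coset_subset_G[OF _ c(2)])
  have "\<one> \<in> P l" using subgroup.one_closed[OF sg] .
  then have "c \<otimes> \<one> \<in> C" unfolding c(3) l_coset_def by (rule UN_I) simp
  then show "C \<noteq> {}" by (rule ex_in_conv[THEN iffD1, OF exI])
qed

lemma cact_inv:
  assumes "\<forall>l\<in>Lam. subgroup (P l) G" "g \<in> carrier G" "u \<in> cverts G Lam P"
  shows "cact G g (cact G (inv g) u) = u"
proof (cases u)
  case (El h)
  have h: "h \<in> carrier G" using assms(3)[unfolded El cverts_El] .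
  have "g \<otimes> (inv g \<otimes> h) = h" using h assms(2) by (simp add: m_assoc[symmetric])
  then show ?thesis unfolding El by simp
next
  case (Cos l C)
  have C: "C \<subseteq> carrier G" using cverts_coset_sub(1)[OF assms(1) assms(3)[unfolded Cos]] .
  have "l_coset G g (l_coset G (inv g) C) = C"
    using lcos_m_assoc[OF C assms(2) inv_closed[OF assms(2)]] lcos_mult_one[OF C] assms(2) by simp
  then show ?thesis unfolding Cos by simp
qed

lemma img_dist:
  assumes "g \<in> carrier G" "A \<subseteq> carrier G" "B \<subseteq> carrier G"
  shows "{word_dist G S a b | a b. a \<in> (\<lambda>x. g \<otimes> x) ` A \<and> b \<in> (\<lambda>x. g \<otimes> x) ` B}
     = {word_dist G S a b | a b. a \<in> A \<and> b \<in> B}" (is "?L = ?R")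
proof (rule equalityI; rule subsetI)
  fix z assume "z \<in> ?L"
  then obtain x y where xy: "x \<in> A" "y \<in> B" "z = word_dist G S (g \<otimes> x) (g \<otimes> y)" by blast
  then have "z = word_dist G S x y" using assms by (simp add: word_dist_trans_inv subsetD)
  then show "z \<in> ?R" using xy by blast
next
  fix z assume "z \<in> ?R"
  then obtain x y where xy: "x \<in> A" "y \<in> B" "z = word_dist G S x y" by blast
  then have "z = word_dist G S (g \<otimes> x) (g \<otimes> y)" using assms by (simp add: word_dist_trans_inv subsetD)
  then show "z \<in> ?L" using xy by blast
qed

lemma img_dist1:
  assumes "g \<in> carrier G" "a \<in> carrier G" "C \<subseteq> carrier G"
  shows "{word_dist G S (g \<otimes> a) c | c. c \<in> (\<lambda>x. g \<otimes> x) ` C} = {word_dist G S a c | c. c \<in> C}" (is "?L = ?R")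
proof (rule equalityI; rule subsetI)
  fix z assume "z \<in> ?L"
  then obtain x where xy: "x \<in> C" "z = word_dist G S (g \<otimes> a) (g \<otimes> x)" by blast
  then have "z = word_dist G S a x" using assms by (simp add: word_dist_trans_inv subsetD)
  then show "z \<in> ?R" using xy by blast
next
  fix z assume "z \<in> ?R"
  then obtain x where xy: "x \<in> C" "z = word_dist G S a x" by blast
  then have "z = word_dist G S (g \<otimes> a) (g \<otimes> x)" using assms by (simp add: word_dist_trans_inv subsetD)
  then show "z \<in> ?L" using xy by blast
qed

lemma img_dist2:
  assumes "g \<in> carrier G" "a \<in> carrier G" "C \<subseteq> carrier G"
  shows "{word_dist G S c (g \<otimes> a) | c. c \<in> (\<lambda>x. g \<otimes> x) ` C} = {word_dist G S c a | c. c \<in> C}" (is "?L = ?R")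
proof (rule equalityI; rule subsetI)
  fix z assume "z \<in> ?L"
  then obtain x where xy: "x \<in> C" "z = word_dist G S (g \<otimes> x) (g \<otimes> a)" by blast
  then have "z = word_dist G S x a" using assms by (simp add: word_dist_trans_inv subsetD)
  then show "z \<in> ?R" using xy by blast
next
  fix z assume "z \<in> ?R"
  then obtain x where xy: "x \<in> C" "z = word_dist G S x a" by blast
  then have "z = word_dist G S (g \<otimes> x) (g \<otimes> a)" using assms by (simp add: word_dist_trans_inv subsetD)
  then show "z \<in> ?L" using xy by blast
qed

lemma cact_iso:
  assumes "\<forall>l\<in>Lam. subgroup (P l) G" "g \<in> carrier G" "u \<in> cverts G Lam P" "v \<in> cverts G Lam P"
  shows "ext_dist G S (cact G g u) (cact G g v) = ext_dist G S u v"
proof (cases u)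
  case (El a)
  have a: "a \<in> carrier G" using assms(3)[unfolded El cverts_El] .
  show ?thesis
  proof (cases v)
    case (El b)
    have "b \<in> carrier G" using assms(4)[unfolded El cverts_El] .
    then show ?thesis using \<open>u = El a\<close> El a assms(2) by (simp add: word_dist_trans_inv)
  next
    case (Cos l C)
    have "C \<subseteq> carrier G" using cverts_coset_sub(1)[OF assms(1) assms(4)[unfolded Cos]] .
    then show ?thesis using \<open>u = El a\<close> Cos img_dist1[OF assms(2) a] by (simp add: l_coset_image)
  qed
next
  case (Cos l A)
  have A: "A \<subseteq> carrier G" using cverts_coset_sub(1)[OF assms(1) assms(3)[unfolded Cos]] .
  show ?thesis
  proof (cases v)
    case (El b)
    have "b \<in> carrier G" using assms(4)[unfolded El cverts_El] .
    then show ?thesis using \<open>u = Cos l A\<close> El img_dist2[OF assms(2) _ A] by (simp add: l_coset_image)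
  next
    case (Cos m B)
    have "B \<subseteq> carrier G" using cverts_coset_sub(1)[OF assms(1) assms(4)[unfolded Cos]] .
    then show ?thesis using \<open>u = Cos l A\<close> Cos img_dist[OF assms(2) A] by (simp add: l_coset_image)
  qed
qed

end




lemma rch_sym: assumes "\<And>x y. R x y \<Longrightarrow> R y x" shows "rch R x k y \<Longrightarrow> rch R y k x"
proof (induction rule: rch.induct)
  case (rch_refl x k) show ?case by (rule rch.rch_refl)
next
  case (rch_step x y k z)
  have "rch R y 1 x" using rch.rch_step[of R y x 0 x, OF assms[OF rch_step.hyps(1)] rch.rch_refl] by simp
  from rch_trans[OF rch_step.IH this] show ?case by simp
qed

lemma wit_CC:
  assumes "A \<noteq> {}" "B \<noteq> {}" "ext_dist G S (Cos l A) (Cos m B) \<le> n"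
  shows "\<exists>a\<in>A. \<exists>b\<in>B. word_dist G S a b \<le> n"
proof -
  have ne: "{word_dist G S a b | a b. a \<in> A \<and> b \<in> B} \<noteq> {}" using assms(1,2) by blast
  have "ext_dist G S (Cos l A) (Cos m B) \<in> {word_dist G S a b | a b. a \<in> A \<and> b \<in> B}"
    using Inf_nat_def1[OF ne] by simp
  then obtain a b where "a \<in> A" "b \<in> B" "ext_dist G S (Cos l A) (Cos m B) = word_dist G S a b" by blast
  then show ?thesis using assms(3) by metis
qed

lemma wit_EC:
  assumes "C \<noteq> {}" "ext_dist G S (El a) (Cos l C) \<le> n"
  shows "\<exists>c\<in>C. word_dist G S a c \<le> n"
proof -
  have ne: "{word_dist G S a c | c. c \<in> C} \<noteq> {}" using assms(1) by blast
  have "ext_dist G S (El a) (Cos l C) \<in> {word_dist G S a c | c. c \<in> C}"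
    using Inf_nat_def1[OF ne] by simp
  then obtain c where "c \<in> C" "ext_dist G S (El a) (Cos l C) = word_dist G S a c" by blast
  then show ?thesis using assms(2) by metis
qed

lemma E_sym: "coned_edge G S Lam P a b \<Longrightarrow> coned_edge G S Lam P b a"
  unfolding coned_edge_def by blast

lemma avR_sym: "(\<And>a b. E a b \<Longrightarrow> E b a) \<Longrightarrow> avR E u a b \<Longrightarrow> avR E u b a"
  unfolding avR_def by blast

context group begin

lemma edge_El_Cos:
  assumes "x \<in> carrier G" "Cos m C \<in> cverts G Lam P" "x \<in> C"
  shows "coned_edge G S Lam P (El x) (Cos m C)"
  unfolding coned_edge_def
proof (intro conjI disjI2)
  show "El x \<in> cverts G Lam P" using assms(1) by (simp add: cverts_El)
  show "Cos m C \<in> cverts G Lam P" by fact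
  show "El x \<noteq> Cos m C" by simp
  show "\<exists>g l C'. (El x = El g \<and> Cos m C = Cos l C' \<or> Cos m C = El g \<and> El x = Cos l C') \<and> g \<in> C'"
    using assms(3) by blast
qed

lemma cayley_rch:
  assumes "S \<subseteq> carrier G" "set ws \<subseteq> S \<union> m_inv G ` S" "a \<in> carrier G"
  shows "rch (avR (coned_edge G S Lam P) (Cos l0 C0)) (El a) (length ws) (El (a \<otimes> foldr (\<otimes>) ws \<one>))"
  using assms(2,3)
proof (induction ws arbitrary: a)
  case Nil
  then show ?case by (simp add: rch.rch_refl)
next
  case (Cons w ws)
  have wS: "w \<in> S \<union> m_inv G ` S" using Cons.prems(1) by simp
  have SC: "S \<union> m_inv G ` S \<subseteq> carrier G" using assms(1) by auto
  have w: "w \<in> carrier G" using wS SC by blast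
  have wsC: "set ws \<subseteq> carrier G" using Cons.prems(1) SC by auto
  have aw: "a \<otimes> w \<in> carrier G" using w Cons.prems(2) by simp
  have IH: "rch (avR (coned_edge G S Lam P) (Cos l0 C0)) (El (a \<otimes> w)) (length ws) (El ((a \<otimes> w) \<otimes> foldr (\<otimes>) ws \<one>))"
    using Cons.IH[OF _ aw] Cons.prems(1) by simp
  have eq: "(a \<otimes> w) \<otimes> foldr (\<otimes>) ws \<one> = a \<otimes> foldr (\<otimes>) (w # ws) \<one>"
    using m_assoc[OF Cons.prems(2) w foldr_closed[OF wsC]] by simp
  have edge: "avR (coned_edge G S Lam P) (Cos l0 C0) (El a) (El (a \<otimes> w))"
  proof (cases "a \<otimes> w = a")
    case True then show ?thesis unfolding avR_def by simp
  next
    case False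
    have c1: "El a \<in> cverts G Lam P" "El (a \<otimes> w) \<in> cverts G Lam P"
      using Cons.prems(2) aw cverts_El by auto
    have "\<exists>g s. g \<in> carrier G \<and> s \<in> S \<and>
          ((El a = El g \<and> El (a \<otimes> w) = El (g \<otimes> s)) \<or> (El (a \<otimes> w) = El g \<and> El a = El (g \<otimes> s)))"
    proof (cases "w \<in> S")
      case True then show ?thesis using Cons.prems(2) by blast
    next
      case False
      then obtain s where s: "s \<in> S" "w = inv s" using wS by blast
      have sc: "s \<in> carrier G" using s(1) assms(1) by blast
      have "(a \<otimes> w) \<otimes> s = a" using s(2) sc Cons.prems(2) by (simp add: m_assoc)
      then show ?thesis using aw s(1) by (intro exI[of _ "a \<otimes> w"] exI[of _ s]) simp
    qed
    then have "coned_edge G S Lam P (El a) (El (a \<otimes> w))"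
      unfolding coned_edge_def using c1 False by simp
    then show ?thesis unfolding avR_def by simp
  qed
  show ?case using rch.rch_step[OF edge IH] eq by simp
qed

lemma dist_rch:
  assumes "S \<subseteq> carrier G" "generate G S = carrier G" "a \<in> carrier G" "b \<in> carrier G"
    "word_dist G S a b \<le> d"
  shows "rch (avR (coned_edge G S Lam P) (Cos l0 C0)) (El a) d (El b)"
proof -
  have ab: "inv a \<otimes> b \<in> carrier G" using assms(3,4) by simp
  obtain ws where ws: "length ws = word_len G S (inv a \<otimes> b)" "set ws \<subseteq> S \<union> m_inv G ` S"
     "foldr (\<otimes>) ws \<one> = inv a \<otimes> b"
    using word_len_attained[OF assms(1,2) ab] by blast
  have "a \<otimes> (inv a \<otimes> b) = b" using assms(3,4) by (simp add: m_assoc[symmetric])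
  then have "rch (avR (coned_edge G S Lam P) (Cos l0 C0)) (El a) (length ws) (El b)"
    using cayley_rch[OF assms(1) ws(2) assms(3), of Lam P l0 C0] ws(3) by simp
  moreover have "length ws \<le> d" using ws(1) assms(5) unfolding word_dist_def by simp
  ultimately show ?thesis by (rule rch_mono)
qed

lemma in_own_coset: "subgroup H G \<Longrightarrow> c \<in> carrier G \<Longrightarrow> c \<in> l_coset G c H"
  unfolding l_coset_def using subgroup.one_closed[of H G] by force

end



context group begin

lemma transl_rips:
  assumes sub: "\<forall>l\<in>Lam. subgroup (P l) G"
    and s: "\<sigma> \<in> rips_simplices G S Lam P n" and g: "g \<in> carrier G"
  shows "cact G (inv g) ` \<sigma> \<in> rips_simplices G S Lam P n"
    "\<sigma> = cact G g ` (cact G (inv g) ` \<sigma>)"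
proof -
  have ig: "inv g \<in> carrier G" using g by simp
  have s': "finite \<sigma>" "\<sigma> \<noteq> {}" "\<sigma> \<subseteq> cverts G Lam P"
    "\<And>u v. u \<in> \<sigma> \<Longrightarrow> v \<in> \<sigma> \<Longrightarrow> u \<noteq> v \<Longrightarrow> ext_dist G S u v \<le> n"
    using s unfolding rips_simplices_def by auto
  have inv_eq: "\<And>u. u \<in> \<sigma> \<Longrightarrow> cact G g (cact G (inv g) u) = u"
    using cact_inv[OF sub g] s'(3) by blast
  show "\<sigma> = cact G g ` (cact G (inv g) ` \<sigma>)"
    unfolding image_image using inv_eq by simp
  show "cact G (inv g) ` \<sigma> \<in> rips_simplices G S Lam P n"
    unfolding rips_simplices_def
  proof (intro CollectI conjI ballI impI)
    show "finite (cact G (inv g) ` \<sigma>)" using s'(1) by simp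
    show "cact G (inv g) ` \<sigma> \<noteq> {}" using s'(2) by simp
    show "cact G (inv g) ` \<sigma> \<subseteq> cverts G Lam P" using cact_cverts[OF sub ig] s'(3) by blast
    fix u' v' assume u': "u' \<in> cact G (inv g) ` \<sigma>" and v': "v' \<in> cact G (inv g) ` \<sigma>" and ne: "u' \<noteq> v'"
    obtain u where u: "u \<in> \<sigma>" "u' = cact G (inv g) u" using u' by blast
    obtain v where v: "v \<in> \<sigma>" "v' = cact G (inv g) v" using v' by blast
    have "u \<noteq> v" using ne u v by blast
    then have "ext_dist G S u v \<le> n" using s'(4) u(1) v(1) by blast
    moreover have "ext_dist G S u' v' = ext_dist G S u v"
      unfolding u(2) v(2) using cact_iso[OF sub ig] s'(3) u(1) v(1) by blast
    ultimately show "ext_dist G S u' v' \<le> n" by simp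
  qed
qed


lemma main_cocompact:
  assumes fS: "finite S" and SC: "S \<subseteq> carrier G" and gen: "generate G S = carrier G"
    and fL: "finite Lam" and rh: "rel_hyperbolic G S Lam P"
  shows "\<exists>F. finite F \<and> F \<subseteq> rips_simplices G S Lam P n \<and>
           (\<forall>\<sigma>\<in>rips_simplices G S Lam P n. \<exists>g\<in>carrier G. \<exists>\<tau>\<in>F. \<sigma> = cact G g ` \<tau>)"
proof -
  define E where "E = coned_edge G S Lam P"
  have sub: "\<forall>l\<in>Lam. subgroup (P l) G" using rh unfolding rel_hyperbolic_def by blast
  have fine: "fine_graph E" using rh unfolding rel_hyperbolic_def E_def by blast
  have symE: "\<And>a b. E a b \<Longrightarrow> E b a" unfolding E_def by (rule E_sym)
  define B where "B = {g \<in> carrier G. word_len G S g \<le> n}"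
  have finB: "finite B" unfolding B_def by (rule ball_finite[OF fS SC gen])
  have oneB: "\<one> \<in> B" unfolding B_def by (simp add: word_len_one)
  define K where "K = 3 * n + 4"
  define U where "U = (\<lambda>l. Cos l (P l))"
  define Q where "Q = {p \<in> carrier G. \<exists>l\<in>Lam. E (U l) (El p) \<and> rch (avR E (U l)) (El p) K (El \<one>)}"
  have PlC: "\<And>l. l \<in> Lam \<Longrightarrow> P l \<subseteq> carrier G" using sub subgroup.subset by blast
  have Ucv: "\<And>l. l \<in> Lam \<Longrightarrow> U l \<in> cverts G Lam P"
  proof -
    fix l assume l: "l \<in> Lam"
    have "Cos l (l_coset G \<one> (P l)) \<in> cverts G Lam P" using cverts_CosI[OF l] by simp
    then show "U l \<in> cverts G Lam P" unfolding U_def using lcos_mult_one[OF PlC[OF l]] by simp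
  qed
  have finQ: "finite Q"
  proof -
    have "Q \<subseteq> (\<Union>l\<in>Lam. El -` {x. E (U l) x \<and> rch (avR E (U l)) x K (El \<one>)})"
      unfolding Q_def by blast
    moreover have "finite (\<Union>l\<in>Lam. El -` {x. E (U l) x \<and> rch (avR E (U l)) x K (El \<one>)})"
    proof (rule finite_UN_I[OF fL])
      fix l assume l: "l \<in> Lam"
      have "\<one> \<in> P l" using bspec[OF sub l] subgroup.one_closed by blast
      then have "E (El \<one>) (U l)" unfolding E_def U_def
        using edge_El_Cos[of \<one> l "P l" Lam P S] Ucv[OF l] unfolding U_def by simp
      then have "E (U l) (El \<one>)" by (rule symE)
      from angle_finite[OF fine symE this]
      have "finite {x. E (U l) x \<and> rch (avR E (U l)) x K (El \<one>)}" .
      then show "finite (El -` {x. E (U l) x \<and> rch (avR E (U l)) x K (El \<one>)})"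
        by (rule finite_vimageI) (simp add: inj_def)
    qed
    ultimately show ?thesis by (rule finite_subset)
  qed
  define R where "R = B \<union> (\<Union>p\<in>Q. (\<lambda>x. p \<otimes> x) ` B)"
  have finR: "finite R" unfolding R_def using finB finQ by simp
  have oneR: "\<one> \<in> R" unfolding R_def using oneB by simp
  define N where "N = El ` R \<union> (\<lambda>(l, c). Cos l (l_coset G c (P l))) ` (Lam \<times> R)"
  have finN: "finite N" unfolding N_def using finR fL by simp
  have NEl: "\<And>c. c \<in> R \<Longrightarrow> El c \<in> N" unfolding N_def by blast
  have NCos: "\<And>l c. l \<in> Lam \<Longrightarrow> c \<in> R \<Longrightarrow> Cos l (l_coset G c (P l)) \<in> N" unfolding N_def by force
  define F where "F = {\<tau> \<in> rips_simplices G S Lam P n. \<tau> \<subseteq> N}"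
  have finF: "finite F"
  proof -
    have "F \<subseteq> Pow N" unfolding F_def by blast
    then show ?thesis using finN by (meson finite_Pow_iff finite_subset)
  qed
  have key: "\<And>\<sigma>. \<sigma> \<in> rips_simplices G S Lam P n \<Longrightarrow> \<exists>g\<in>carrier G. cact G (inv g) ` \<sigma> \<subseteq> N"
  proof -
    fix \<sigma> assume s: "\<sigma> \<in> rips_simplices G S Lam P n"
    have s': "finite \<sigma>" "\<sigma> \<noteq> {}" "\<sigma> \<subseteq> cverts G Lam P"
      "\<And>u v. u \<in> \<sigma> \<Longrightarrow> v \<in> \<sigma> \<Longrightarrow> u \<noteq> v \<Longrightarrow> ext_dist G S u v \<le> n"
      using s unfolding rips_simplices_def by auto
    show "\<exists>g\<in>carrier G. cact G (inv g) ` \<sigma> \<subseteq> N"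
    proof (cases "\<exists>a. El a \<in> \<sigma>")
      case True
      then obtain a where a\<sigma>: "El a \<in> \<sigma>" by blast
      have a: "a \<in> carrier G" using s'(3) a\<sigma> cverts_El by blast
      have "cact G (inv a) ` \<sigma> \<subseteq> N"
      proof
        fix v' assume "v' \<in> cact G (inv a) ` \<sigma>"
        then obtain v where v: "v \<in> \<sigma>" "v' = cact G (inv a) v" by blast
        show "v' \<in> N"
        proof (cases "v = El a")
          case True
          then have "v' = El \<one>" using v(2) a by simp
          then show ?thesis using NEl[OF oneR] by simp
        next
          case False
          have d: "ext_dist G S (El a) v \<le> n" using s'(4)[OF a\<sigma> v(1) not_sym[OF False]] .
          show ?thesis
          proof (cases v)
            case (El b)
            have b: "b \<in> carrier G" using s'(3) v(1) El cverts_El by blast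
            have "inv a \<otimes> b \<in> B" unfolding B_def using d El a b by (simp add: word_dist_def)
            then have "inv a \<otimes> b \<in> R" unfolding R_def by simp
            then show ?thesis using NEl v(2) El by simp
          next
            case (Cos m C)
            have vc: "Cos m C \<in> cverts G Lam P" using s'(3) v(1) Cos by blast
            obtain c where c: "m \<in> Lam" "c \<in> carrier G" "C = l_coset G c (P m)"
              using cverts_Cos[OF vc] by blast
            have Cne: "C \<noteq> {}" and Csub: "C \<subseteq> carrier G" using cverts_coset_sub[OF sub vc] by auto
            obtain x where x: "x \<in> C" "word_dist G S a x \<le> n" using wit_EC[OF Cne d[unfolded Cos]] by blast
            have xc: "x \<in> carrier G" using x(1) Csub by blast
            have "l_coset G (inv a) C = l_coset G (inv a \<otimes> x) (P m)"
              unfolding c(3) by (rule cos_rep[OF bspec[OF sub c(1)] c(2) inv_closed[OF a]]) (use x(1) c(3) in simp)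
            moreover have "inv a \<otimes> x \<in> R" unfolding R_def B_def using x(2) a xc by (simp add: word_dist_def)
            ultimately show ?thesis using NCos[OF c(1)] v(2) Cos by simp
          qed
        qed
      qed
      then show ?thesis using a by blast
    next
      case False
      then have noEl: "\<And>a. El a \<notin> \<sigma>" by blast
      obtain u where u\<sigma>: "u \<in> \<sigma>" using s'(2) by blast
      obtain l C where uC: "u = Cos l C" using noEl u\<sigma> by (cases u) auto
      have ucv: "Cos l C \<in> cverts G Lam P" using s'(3) u\<sigma> uC by blast
      obtain c where c: "l \<in> Lam" "c \<in> carrier G" "C = l_coset G c (P l)"
        using cverts_Cos[OF ucv] by blast
      have Cne: "C \<noteq> {}" and Csub: "C \<subseteq> carrier G" using cverts_coset_sub[OF sub ucv] by auto
      have tr: "\<And>x. x \<in> C \<Longrightarrow> cact G (inv x) u = U l"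
      proof -
        fix x assume x: "x \<in> C"
        have xc: "x \<in> carrier G" using x Csub by blast
        have "l_coset G (inv x) C = l_coset G (inv x \<otimes> x) (P l)"
          unfolding c(3) by (rule cos_rep[OF bspec[OF sub c(1)] c(2) inv_closed[OF xc]]) (use x c(3) in simp)
        also have "\<dots> = P l" using xc lcos_mult_one[OF PlC[OF c(1)]] by simp
        finally show "cact G (inv x) u = U l" unfolding uC U_def by simp
      qed
      have UN: "U l \<in> N"
      proof -
        have "Cos l (l_coset G \<one> (P l)) \<in> N" by (rule NCos[OF c(1) oneR])
        then show ?thesis unfolding U_def using lcos_mult_one[OF PlC[OF c(1)]] by simp
      qed
      show ?thesis
      proof (cases "\<exists>v\<in>\<sigma>. v \<noteq> u")
        case False
        then have "\<sigma> = {u}" using u\<sigma> by blast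
        obtain x where x: "x \<in> C" using Cne by blast
        have xc: "x \<in> carrier G" using x Csub by blast
        have "cact G (inv x) ` \<sigma> \<subseteq> N" using \<open>\<sigma> = {u}\<close> tr[OF x] UN by simp
        then show ?thesis using xc by blast
      next
        case True
        then obtain v where v\<sigma>: "v \<in> \<sigma>" and vu: "v \<noteq> u" by blast
        obtain m D where vD: "v = Cos m D" using noEl v\<sigma> by (cases v) auto
        have vcv: "Cos m D \<in> cverts G Lam P" using s'(3) v\<sigma> vD by blast
        have Dne: "D \<noteq> {}" and Dsub: "D \<subseteq> carrier G" using cverts_coset_sub[OF sub vcv] by auto
        have dd: "ext_dist G S (Cos l C) (Cos m D) \<le> n" using s'(4)[OF u\<sigma> v\<sigma> not_sym[OF vu]] unfolding uC vD .
        obtain a b where ab: "a \<in> C" "b \<in> D" "word_dist G S a b \<le> n" using wit_CC[OF Cne Dne dd] by blast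
        have a: "a \<in> carrier G" using ab(1) Csub by blast
        have b: "b \<in> carrier G" using ab(2) Dsub by blast
        have ia: "inv a \<in> carrier G" using a by simp
        define \<sigma>' where "\<sigma>' = cact G (inv a) ` \<sigma>"
        have s2: "\<sigma>' \<in> rips_simplices G S Lam P n" unfolding \<sigma>'_def by (rule transl_rips(1)[OF sub s a])
        have s2': "\<sigma>' \<subseteq> cverts G Lam P"
          "\<And>u v. u \<in> \<sigma>' \<Longrightarrow> v \<in> \<sigma>' \<Longrightarrow> u \<noteq> v \<Longrightarrow> ext_dist G S u v \<le> n"
          using s2 unfolding rips_simplices_def by auto
        have u': "cact G (inv a) u = U l" using tr[OF ab(1)] .
        have U\<sigma>: "U l \<in> \<sigma>'" unfolding \<sigma>'_def using u' u\<sigma> by force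
        have inj: "\<And>w. w \<in> \<sigma> \<Longrightarrow> w \<noteq> u \<Longrightarrow> cact G (inv a) w \<noteq> U l"
        proof
          fix w assume w: "w \<in> \<sigma>" "w \<noteq> u" "cact G (inv a) w = U l"
          have "w = cact G a (cact G (inv a) w)" using cact_inv[OF sub a] s'(3) w(1) by (metis subsetD)
          also have "\<dots> = cact G a (cact G (inv a) u)" using w(3) u' by simp
          also have "\<dots> = u" using cact_inv[OF sub a] s'(3) u\<sigma> by (metis subsetD)
          finally show False using w(2) by simp
        qed
        define D' where "D' = l_coset G (inv a) D"
        define v' where "v' = Cos m D'"
        have v'eq: "cact G (inv a) v = v'" unfolding v'_def D'_def vD by simp
        have v'\<sigma>: "v' \<in> \<sigma>'" unfolding \<sigma>'_def using v'eq v\<sigma> by force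
        have v'U: "v' \<noteq> U l" using inj[OF v\<sigma> vu] v'eq by simp
        define b' where "b' = inv a \<otimes> b"
        have b'D': "b' \<in> D'" unfolding b'_def D'_def l_coset_def using ab(2) by blast
        have b'c: "b' \<in> carrier G" unfolding b'_def using a b by simp
        have b'n: "word_dist G S \<one> b' \<le> n" using ab(3) b'c unfolding word_dist_def b'_def by simp
        have v'cv: "v' \<in> cverts G Lam P" using s2'(1) v'\<sigma> by blast
        have "cact G (inv a) ` \<sigma> \<subseteq> N"
        proof
          fix w' assume "w' \<in> cact G (inv a) ` \<sigma>"
          then obtain w where w: "w \<in> \<sigma>" "w' = cact G (inv a) w" by blast
          show "w' \<in> N"
          proof (cases "w = u")
            case True then show ?thesis using w(2) u' UN by simp
          next
            case False
            have w'U: "w' \<noteq> U l" using inj[OF w(1) False] w(2) by simp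
            have w'\<sigma>: "w' \<in> \<sigma>'" unfolding \<sigma>'_def using w by blast
            have w'cv: "w' \<in> cverts G Lam P" using s2'(1) w'\<sigma> by blast
            obtain m' W0 where wW: "w = Cos m' W0" using noEl w(1) by (cases w) auto
            define W where "W = l_coset G (inv a) W0"
            have w'W: "w' = Cos m' W" unfolding W_def using w(2) wW by simp
            obtain e where e: "m' \<in> Lam" "e \<in> carrier G" "W = l_coset G e (P m')"
              using cverts_Cos[OF w'cv[unfolded w'W]] by blast
            have Wne: "W \<noteq> {}" and Wsub: "W \<subseteq> carrier G"
              using cverts_coset_sub[OF sub w'cv[unfolded w'W]] by auto
            have Plne: "P l \<noteq> {}" using bspec[OF sub c(1)] subgroup.one_closed by blast
            have dd: "ext_dist G S (U l) w' \<le> n" using s2'(2)[OF U\<sigma> w'\<sigma> not_sym[OF w'U]] .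
            obtain p x where px: "p \<in> P l" "x \<in> W" "word_dist G S p x \<le> n"
              using wit_CC[OF Plne Wne dd[unfolded U_def w'W]] by blast
            have pc: "p \<in> carrier G" using px(1) PlC[OF c(1)] by blast
            have xc: "x \<in> carrier G" using px(2) Wsub by blast
            obtain y y' where yy: "y \<in> W" "y' \<in> D'" "word_dist G S y y' \<le> n"
            proof (cases "w' = v'")
              case True
              then have "W = D'" using w'W v'_def by simp
              moreover have "word_dist G S b' b' \<le> n" unfolding word_dist_def using b'c by (simp add: word_len_one)
              ultimately show ?thesis using that b'D' by blast
            next
              case False
              have dd: "ext_dist G S w' v' \<le> n" using s2'(2)[OF w'\<sigma> v'\<sigma> False] .
              have "D' \<noteq> {}" using b'D' by blast
              then show ?thesis using that wit_CC[OF Wne _ dd[unfolded w'W v'_def]] by blast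
            qed
            have yc: "y \<in> carrier G" using yy(1) Wsub by blast
            have D'sub: "D' \<subseteq> carrier G" using cverts_coset_sub(1)[OF sub v'cv[unfolded v'_def]] .
            have y'c: "y' \<in> carrier G" using yy(2) D'sub by blast
            let ?R = "avR E (U l)"
            have Rsym: "\<And>x y. ?R x y \<Longrightarrow> ?R y x" unfolding avR_def using symE by blast
            have r1: "rch ?R (El p) n (El x)" unfolding E_def U_def
              by (rule dist_rch[OF SC gen pc xc px(3)])
            have r2: "rch ?R (El y) n (El y')" unfolding E_def U_def
              by (rule dist_rch[OF SC gen yc y'c yy(3)])
            have r3': "rch ?R (El \<one>) n (El b')" unfolding E_def U_def
              by (rule dist_rch[OF SC gen one_closed b'c b'n])
            have r3: "rch ?R (El b') n (El \<one>)" by (rule rch_sym[OF Rsym r3'])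
            have s1: "?R (El x) w'" unfolding avR_def E_def
              using edge_El_Cos[OF xc w'cv[unfolded w'W] px(2)] w'U w'W by (simp add: U_def)
            have s2: "?R w' (El y)" unfolding avR_def E_def
              using E_sym[OF edge_El_Cos[OF yc w'cv[unfolded w'W] yy(1)]] w'U w'W by (simp add: U_def)
            have s3: "?R (El y') v'" unfolding avR_def E_def
              using edge_El_Cos[OF y'c v'cv[unfolded v'_def] yy(2)] v'U v'_def by (simp add: U_def)
            have s4: "?R v' (El b')" unfolding avR_def E_def
              using E_sym[OF edge_El_Cos[OF b'c v'cv[unfolded v'_def] b'D']] v'U v'_def by (simp add: U_def)
            have t4: "rch ?R v' (Suc n) (El \<one>)" by (rule rch.rch_step[OF s4 r3])
            have t5: "rch ?R (El y') (Suc (Suc n)) (El \<one>)" by (rule rch.rch_step[OF s3 t4])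
            have t6: "rch ?R (El y) (n + Suc (Suc n)) (El \<one>)" by (rule rch_trans[OF r2 t5])
            have t7: "rch ?R w' (Suc (n + Suc (Suc n))) (El \<one>)" by (rule rch.rch_step[OF s2 t6])
            have t8: "rch ?R (El x) (Suc (Suc (n + Suc (Suc n)))) (El \<one>)" by (rule rch.rch_step[OF s1 t7])
            have t9: "rch ?R (El p) (n + Suc (Suc (n + Suc (Suc n)))) (El \<one>)" by (rule rch_trans[OF r1 t8])
            have "n + Suc (Suc (n + Suc (Suc n))) = K" unfolding K_def by simp
            then have walk: "rch ?R (El p) K (El \<one>)" using t9 by simp
            have ep: "E (U l) (El p)"
            proof -
              have "coned_edge G S Lam P (El p) (Cos l (P l))"
                using edge_El_Cos[OF pc Ucv[OF c(1), unfolded U_def] px(1)] .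
              then show ?thesis unfolding E_def U_def by (rule E_sym)
            qed
            have pQ: "p \<in> Q" unfolding Q_def using pc c(1) ep walk by blast
            have "inv p \<otimes> x \<in> B" unfolding B_def using px(3) pc xc by (simp add: word_dist_def)
            moreover have "x = p \<otimes> (inv p \<otimes> x)" using pc xc by (simp add: m_assoc[symmetric])
            ultimately have xR: "x \<in> R" unfolding R_def using pQ by blast
            have "W = l_coset G x (P m')"
              using l_repr_independence[OF px(2)[unfolded e(3)] e(2) bspec[OF sub e(1)]] e(3) by simp
            then show ?thesis using w'W NCos[OF e(1) xR] by simp
          qed
        qed
        then show ?thesis using a by blast
      qed
    qed
  qed
  show ?thesis
  proof (intro exI[of _ F] conjI ballI)
    show "finite F" by (rule finF)
    show "F \<subseteq> rips_simplices G S Lam P n" unfolding F_def by blast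
    fix \<sigma> assume s: "\<sigma> \<in> rips_simplices G S Lam P n"
    obtain g where g: "g \<in> carrier G" "cact G (inv g) ` \<sigma> \<subseteq> N" using key[OF s] by blast
    have "cact G (inv g) ` \<sigma> \<in> F" unfolding F_def using transl_rips(1)[OF sub s g(1)] g(2) by blast
    then show "\<exists>g\<in>carrier G. \<exists>\<tau>\<in>F. \<sigma> = cact G g ` \<tau>" using transl_rips(2)[OF sub s g(1)] g(1) by blast
  qed
qed

end


theorem corollary2p4:
  fixes G :: "('a, 'b) monoid_scheme" and S :: "'a set" and Lam :: "'l set"
    and P :: "'l \<Rightarrow> 'a set" and n :: nat
  assumes "group G"
    and "finite S" and "S \<subseteq> carrier G" and "generate G S = carrier G"
    and "finite Lam"
    and "rel_hyperbolic G S Lam P"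
    and "n \<ge> 1"
  shows "\<exists>F. finite F \<and> F \<subseteq> rips_simplices G S Lam P n \<and>
           (\<forall>\<sigma>\<in>rips_simplices G S Lam P n. \<exists>g\<in>carrier G. \<exists>\<tau>\<in>F. \<sigma> = cact G g ` \<tau>)"
  by (rule group.main_cocompact[OF assms(1) assms(2) assms(3) assms(4) assms(5) assms(6)])

end
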